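(* Let $\mathcal{H}$ be a PICOD hypergraph with $n\ge1$ clients having request-sets $R_1,\dots,R_n$. Then $\beta(\mathcal{H})=1$ if and only if there exist indices $d_1\in R_1,\dots,d_n\in R_n$ such that the set $\{d_1,\dots,d_n\}$ is an independent set of $\mathcal{H}$.
   Context: PICOD problem: a server holds $m$ messages $b_1,\dots,b_m\in\mathbb{F}_q$; there are $n$ clients, client $i$ having side-information $\{b_j: j\in S_i\}$, $S_i\subseteq[m]$, and request-set $R_i=[m]\setminus S_i$ (assumed non-empty); client $i$ wants any one message $b_j$ with $j\in R_i$. A PICOD scheme of length $\ell$ over $\mathbb{F}_q$ is an encoding map $\phi:\mathbb{F}_q^m\to\mathbb{F}_q^\ell$ such that for every client $i$ there is an index $j_i\in R_i$ and a function $\psi_i$ with $\psi_i(\phi(b),(b_k)_{k\in S_i})=b_{j_i}$ for all $b\in\mathbb{F}_q^m$. The PICOD hypergraph $\mathcal{H}$ has vertex set $[m]$ and edge set $\{R_i:i\in[n]\}$. $\beta_q(\mathcal{H})$ is the minimum length of a PICOD scheme over $\mathbb{F}_q$, and $\beta(\mathcal{H})=\min_q\beta_q(\mathcal{H})$ over all prime powers $q$. An independent set of $\mathcal{H}$ is a set of vertices no two of which lie in a common edge. *)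

theory Defs
  imports "HOL-Library.FuncSet" "HOL-Number_Theory.Prime_Powers"
begin

text \<open>Messages b_1..b_m over an alphabet of size q (the symbols of F_q are
  represented by {0..<q}; the scheme definition uses no field operations).\<close>
definition msg_space :: "nat \<Rightarrow> nat \<Rightarrow> (nat \<Rightarrow> nat) set" where
  "msg_space m q = {1..m} \<rightarrow>\<^sub>E {..<q}"

text \<open>PICOD scheme of length l over F_q for n clients with request sets R i
  (side information S_i = [m] - R_i).\<close>
definition picod_scheme ::
  "nat \<Rightarrow> nat \<Rightarrow> (nat \<Rightarrow> nat set) \<Rightarrow> nat \<Rightarrow> nat \<Rightarrow> ((nat \<Rightarrow> nat) \<Rightarrow> (nat \<Rightarrow> nat)) \<Rightarrow> bool" where
  "picod_scheme m n R q l \<phi> \<longleftrightarrow>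
     (\<forall>b\<in>msg_space m q. \<phi> b \<in> {1..l} \<rightarrow>\<^sub>E {..<q}) \<and>
     (\<forall>i\<in>{1..n}. \<exists>j\<in>R i. \<exists>\<psi> :: (nat \<Rightarrow> nat) \<Rightarrow> (nat \<Rightarrow> nat) \<Rightarrow> nat.
        \<forall>b\<in>msg_space m q. \<psi> (\<phi> b) (restrict b ({1..m} - R i)) = b j)"

definition beta_q :: "nat \<Rightarrow> nat \<Rightarrow> (nat \<Rightarrow> nat set) \<Rightarrow> nat \<Rightarrow> nat" where
  "beta_q m n R q = (LEAST l. \<exists>\<phi>. picod_scheme m n R q l \<phi>)"

definition beta :: "nat \<Rightarrow> nat \<Rightarrow> (nat \<Rightarrow> nat set) \<Rightarrow> nat" where
  "beta m n R = (INF q\<in>{q::nat. primepow q}. beta_q m n R q)"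

definition picod_edges :: "nat \<Rightarrow> (nat \<Rightarrow> nat set) \<Rightarrow> nat set set" where
  "picod_edges n R = R ` {1..n}"

definition hg_independent :: "nat \<Rightarrow> nat set set \<Rightarrow> nat set \<Rightarrow> bool" where
  "hg_independent m E I \<longleftrightarrow> I \<subseteq> {1..m} \<and>
     (\<forall>u\<in>I. \<forall>v\<in>I. u \<noteq> v \<longrightarrow> \<not> (\<exists>e\<in>E. u \<in> e \<and> v \<in> e))"

end

theory Submission
  imports Defs
begin

lemma pie1_eq:
  assumes "f \<in> {1..1::nat} \<rightarrow>\<^sub>E X" "g \<in> {1..1} \<rightarrow>\<^sub>E X" "f 1 = g 1"
  shows "f = g"
proof (rule ext)
  fix i show "f i = g i"
    using assms by (cases "i = 1") (auto simp: PiE_def extensional_def)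
qed

lemma one_imp_indep:
  assumes q: "q > 1" and R: "\<forall>i\<in>{1..n}. R i \<subseteq> {1..m}"
    and sch: "picod_scheme m n R q 1 \<phi>"
  shows "\<exists>d :: nat \<Rightarrow> nat. (\<forall>i\<in>{1..n}. d i \<in> R i) \<and>
       hg_independent m (picod_edges n R) (d ` {1..n})"
proof -
  have img: "\<forall>b\<in>msg_space m q. \<phi> b \<in> {1..1} \<rightarrow>\<^sub>E {..<q}"
    using sch by (simp add: picod_scheme_def)
  have "\<forall>i\<in>{1..n}. \<exists>p. fst p \<in> R i \<and> (\<forall>b\<in>msg_space m q.
          snd p (\<phi> b) (restrict b ({1..m} - R i)) = b (fst p))"
  proof
    fix i assume i: "i \<in> {1..n}"
    from sch i obtain j \<psi> where "j \<in> R i" "\<forall>b\<in>msg_space m q.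
          \<psi> (\<phi> b) (restrict b ({1..m} - R i)) = b j"
      unfolding picod_scheme_def by blast
    then show "\<exists>p. fst p \<in> R i \<and> (\<forall>b\<in>msg_space m q.
          snd p (\<phi> b) (restrict b ({1..m} - R i)) = b (fst p))"
      by (intro exI[of _ "(j, \<psi>)"]) simp
  qed
  from bchoice[OF this] obtain f where f: "\<forall>i\<in>{1..n}. fst (f i) \<in> R i \<and> (\<forall>b\<in>msg_space m q.
          snd (f i) (\<phi> b) (restrict b ({1..m} - R i)) = b (fst (f i)))" by blast
  define d where "d i = fst (f i)" for i
  define \<Psi> where "\<Psi> i = snd (f i)" for i
  have dR: "\<forall>i\<in>{1..n}. d i \<in> R i" using f d_def by auto
  have dec: "\<And>i b. i \<in> {1..n} \<Longrightarrow> b \<in> msg_space m q \<Longrightarrow>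
      \<Psi> i (\<phi> b) (restrict b ({1..m} - R i)) = b (d i)"
    using f d_def \<Psi>_def by auto
  have key: False if k: "k \<in> {1..n}" and a: "a \<in> {1..n}" and aR: "d a \<in> R k"
      and ne: "d a \<noteq> d k" for k a
  proof -
    define w where "w = d k"
    define u where "u = d a"
    have wm: "w \<in> {1..m}" using dR R k w_def by blast
    have um: "u \<in> {1..m}" using aR R k u_def by blast
    have uRa: "u \<in> R a" using dR a u_def by blast
    have wR: "w \<in> R k" using dR k w_def by blast
    have uR: "u \<in> R k" using aR u_def by simp
    have uw: "u \<noteq> w" using ne u_def w_def by simp
    define B where "B x y = (\<lambda>i\<in>{1..m}. if i = w then x else if i = u then y else (0::nat))" for x y
    have Bm: "B x y \<in> msg_space m q" if "x < q" "y < q" for x y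
      using that q by (auto simp: B_def msg_space_def PiE_iff)
    have Bw: "B x y w = x" for x y using wm by (simp add: B_def)
    have Bu: "B x y u = y" for x y using um uw by (simp add: B_def)
    define Z where "Z = restrict (\<lambda>_. 0::nat) ({1..m} - R k)"
    have BZ: "restrict (B x y) ({1..m} - R k) = Z" for x y
      using wR uR by (auto simp: Z_def B_def restrict_def intro!: ext)
    have decK: "\<Psi> k (\<phi> (B x y)) Z = x" if "x < q" "y < q" for x y
      using dec[OF k Bm[OF that]] BZ Bw w_def by simp
    have phiB: "\<phi> (B x y) \<in> {1..1} \<rightarrow>\<^sub>E {..<q}" if "x < q" "y < q" for x y
      using img Bm[OF that] by blast
    define h where "h x = \<phi> (B x 0) 1" for x
    have "inj_on h {..<q}"
    proof (rule inj_onI)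
      fix x x' assume x: "x \<in> {..<q}" and x': "x' \<in> {..<q}" and hx: "h x = h x'"
      have "\<phi> (B x 0) = \<phi> (B x' 0)"
        using pie1_eq[OF phiB phiB] x x' q hx h_def by auto
      then show "x = x'" using decK x x' q by (metis lessThan_iff zero_less_one order.strict_trans)
    qed
    moreover have "h ` {..<q} \<subseteq> {..<q}"
      using phiB q h_def by (auto simp: PiE_iff)
    ultimately have surj: "h ` {..<q} = {..<q}" using endo_inj_surj by blast
    have "\<phi> (B 0 1) 1 \<in> {..<q}" using phiB[of 0 1] q by (auto simp: PiE_iff)
    then obtain x' where x': "x' < q" "\<phi> (B 0 1) 1 = h x'" using surj by (metis imageE lessThan_iff)
    have eqx: "\<phi> (B 0 1) = \<phi> (B x' 0)"
      using pie1_eq[OF phiB phiB] x' q h_def by auto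
    have "x' = 0" using decK[of 0 1] decK[of x' 0] eqx x' q by simp
    then have eq: "\<phi> (B 0 1) = \<phi> (B 0 0)" using eqx by simp
    have rs: "restrict (B 0 1) ({1..m} - R a) = restrict (B 0 0) ({1..m} - R a)"
      using uRa by (auto simp: B_def restrict_def intro!: ext)
    have "(1::nat) = B 0 1 u" using Bu by simp
    also have "\<dots> = \<Psi> a (\<phi> (B 0 1)) (restrict (B 0 1) ({1..m} - R a))"
      using dec[OF a Bm[of 0 1]] q u_def by simp
    also have "\<dots> = \<Psi> a (\<phi> (B 0 0)) (restrict (B 0 0) ({1..m} - R a))"
      using eq rs by simp
    also have "\<dots> = B 0 0 u" using dec[OF a Bm[of 0 0]] q u_def by simp
    also have "\<dots> = 0" using Bu by simp
    finally show False by simp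
  qed
  have "hg_independent m (picod_edges n R) (d ` {1..n})"
    unfolding hg_independent_def picod_edges_def
  proof (intro conjI ballI impI notI)
    show "d ` {1..n} \<subseteq> {1..m}" using dR R by blast
  next
    fix u v assume u: "u \<in> d ` {1..n}" and v: "v \<in> d ` {1..n}" and uv: "u \<noteq> v"
      and ex: "\<exists>e\<in>R ` {1..n}. u \<in> e \<and> v \<in> e"
    then obtain k where k: "k \<in> {1..n}" "u \<in> R k" "v \<in> R k" by blast
    show False
    proof (cases "u = d k")
      case True
      then have "v \<noteq> d k" using uv by simp
      then show False using key k v by blast
    next
      case False
      then show False using key k u by blast
    qed
  qed
  then show ?thesis using dR by blast
qed

lemma indep_imp_scheme:
  assumes R: "\<forall>i\<in>{1..n}. R i \<subseteq> {1..m}"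
    and dR: "\<forall>i\<in>{1..n}. d i \<in> R i"
    and ind: "hg_independent m (picod_edges n R) (d ` {1..n})"
  shows "picod_scheme m n R 2 1 (\<lambda>b. \<lambda>k\<in>{1..1}. (\<Sum>x\<in>d ` {1..n}. b x) mod 2)"
  unfolding picod_scheme_def
proof (intro conjI ballI)
  fix b :: "nat \<Rightarrow> nat" assume "b \<in> msg_space m 2"
  show "(\<lambda>k\<in>{1..1::nat}. (\<Sum>x\<in>d ` {1..n}. b x) mod 2) \<in> {1..1} \<rightarrow>\<^sub>E {..<2}" by auto
next
  fix i assume i: "i \<in> {1..n}"
  define D where "D = d ` {1..n}"
  have fin: "finite D" using D_def by simp
  have diD: "d i \<in> D" using i D_def by simp
  have Dm: "D \<subseteq> {1..m}" using ind D_def by (simp add: hg_independent_def)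
  have notR: "x \<notin> R i" if "x \<in> D - {d i}" for x
  proof
    assume "x \<in> R i"
    moreover have "d i \<in> R i" using dR i by blast
    ultimately show False using ind that diD i unfolding hg_independent_def picod_edges_def D_def
      by blast
  qed
  define \<psi>0 where "\<psi>0 = (\<lambda>(c::nat\<Rightarrow>nat) (s::nat\<Rightarrow>nat). (c 1 + (\<Sum>x\<in>D - {d i}. s x)) mod 2)"
  have H: "\<forall>b\<in>msg_space m 2. \<psi>0 ((\<lambda>b. \<lambda>k\<in>{1..1::nat}. (\<Sum>x\<in>d ` {1..n}. b x) mod 2) b)
          (restrict b ({1..m} - R i)) = b (d i)"
  proof
    fix b :: "nat \<Rightarrow> nat" assume b: "b \<in> msg_space m 2"
    have bdi: "b (d i) < 2" using b diD Dm by (auto simp: msg_space_def PiE_iff)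
    define T where "T = (\<Sum>x\<in>D - {d i}. b x)"
    have s1: "(\<Sum>x\<in>D. b x) = b (d i) + T"
      using sum.remove[OF fin diD] T_def by simp
    have s2: "(\<Sum>x\<in>D - {d i}. restrict b ({1..m} - R i) x) = T"
      unfolding T_def using notR Dm by (intro sum.cong) auto
    have "((b (d i) + T) mod 2 + T) mod 2 = (b (d i) + 2 * T) mod 2"
      by (simp add: mod_add_left_eq add.assoc mult_2)
    also have "\<dots> = b (d i)" using bdi by simp
    finally show "\<psi>0 ((\<lambda>b. \<lambda>k\<in>{1..1::nat}. (\<Sum>x\<in>d ` {1..n}. b x) mod 2) b)
          (restrict b ({1..m} - R i)) = b (d i)"
      using s1 s2 D_def \<psi>0_def by simp
  qed
  show "\<exists>j\<in>R i. \<exists>\<psi>. \<forall>b\<in>msg_space m 2. \<psi> ((\<lambda>b. \<lambda>k\<in>{1..1::nat}. (\<Sum>x\<in>d ` {1..n}. b x) mod 2) b)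
          (restrict b ({1..m} - R i)) = b j"
    using H dR i by blast
qed

lemma trivial_scheme:
  assumes R: "\<forall>i\<in>{1..n}. R i \<noteq> {}"
  shows "picod_scheme m n R q m (\<lambda>b. b)"
  unfolding picod_scheme_def
proof (intro conjI ballI)
  fix b assume "b \<in> msg_space m q" then show "b \<in> {1..m} \<rightarrow>\<^sub>E {..<q}" by (simp add: msg_space_def)
next
  fix i assume "i \<in> {1..n}"
  then obtain j where "j \<in> R i" using R by blast
  then show "\<exists>j\<in>R i. \<exists>\<psi>. \<forall>b\<in>msg_space m q. \<psi> b (restrict b ({1..m} - R i)) = b j"
    by (intro bexI[of _ j] exI[of _ "\<lambda>c s. c j"]) auto
qed

lemma no_zero_scheme:
  assumes q: "q > 1" and n: "n \<ge> 1" and R: "\<forall>i\<in>{1..n}. R i \<subseteq> {1..m} \<and> R i \<noteq> {}"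
  shows "\<not> picod_scheme m n R q 0 \<phi>"
proof
  assume sch: "picod_scheme m n R q 0 \<phi>"
  have one: "1 \<in> {1..n}" using n by simp
  then obtain j \<psi> where j: "j \<in> R 1" and dec: "\<forall>b\<in>msg_space m q. \<psi> (\<phi> b) (restrict b ({1..m} - R 1)) = b j"
    using sch unfolding picod_scheme_def by blast
  have jm: "j \<in> {1..m}" using R one j by blast
  define B where "B y = (\<lambda>i\<in>{1..m}. if i = j then y else (0::nat))" for y
  have Bm: "B y \<in> msg_space m q" if "y < q" for y using that q by (auto simp: B_def msg_space_def)
  have phi: "\<phi> (B y) \<in> {1..0} \<rightarrow>\<^sub>E {..<q}" if "y < q" for y
    using sch Bm[OF that] unfolding picod_scheme_def by blast
  have "\<phi> (B 0) = \<phi> (B 1)" using phi[of 0] phi[of 1] q by auto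
  moreover have "restrict (B 0) ({1..m} - R 1) = restrict (B 1) ({1..m} - R 1)"
    using j by (auto simp: B_def restrict_def intro!: ext)
  ultimately have "B 0 j = B 1 j" using dec Bm[of 0] Bm[of 1] q by (metis less_trans zero_less_one)
  then show False using jm by (simp add: B_def)
qed

theorem lemma3:
  fixes m n :: nat and R :: "nat \<Rightarrow> nat set"
  assumes "n \<ge> 1"
    and "\<forall>i\<in>{1..n}. R i \<subseteq> {1..m} \<and> R i \<noteq> {}"
  shows "beta m n R = 1 \<longleftrightarrow>
    (\<exists>d :: nat \<Rightarrow> nat. (\<forall>i\<in>{1..n}. d i \<in> R i) \<and>
       hg_independent m (picod_edges n R) (d ` {1..n}))"
proof -
  have ex: "\<exists>l \<phi>. picod_scheme m n R q l \<phi>" for q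
    using trivial_scheme assms(2) by blast
  have bq1: "beta_q m n R q \<ge> 1" if "primepow q" for q
  proof -
    have q: "q > 1" using primepow_gt_Suc_0[OF that] by simp
    have "\<exists>\<phi>. picod_scheme m n R q (beta_q m n R q) \<phi>"
      unfolding beta_q_def using LeastI_ex[OF ex[of q]] .
    then show ?thesis using no_zero_scheme[OF q assms] by (metis less_one not_less)
  qed
  have P2: "primepow (2::nat)" unfolding primepow_def by (rule exI[of _ 2], rule exI[of _ 1]) simp
  let ?K = "beta_q m n R ` {q. primepow q}"
  have Kne: "?K \<noteq> {}" using P2 by blast
  have bdef: "beta m n R = Inf ?K" by (simp add: beta_def)
  show ?thesis
  proof
    assume "beta m n R = 1"
    then have "1 \<in> ?K" using Inf_nat_def1[OF Kne] bdef by simp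
    then obtain q where pq: "primepow q" and b1: "beta_q m n R q = 1" by auto
    have "\<exists>\<phi>. picod_scheme m n R q (beta_q m n R q) \<phi>"
      unfolding beta_q_def using LeastI_ex[OF ex[of q]] .
    then obtain \<phi> where "picod_scheme m n R q 1 \<phi>" using b1 by auto
    then show "\<exists>d :: nat \<Rightarrow> nat. (\<forall>i\<in>{1..n}. d i \<in> R i) \<and>
       hg_independent m (picod_edges n R) (d ` {1..n})"
      using one_imp_indep[of q n R m] primepow_gt_Suc_0[OF pq] assms(2) by auto
  next
    assume "\<exists>d :: nat \<Rightarrow> nat. (\<forall>i\<in>{1..n}. d i \<in> R i) \<and>
       hg_independent m (picod_edges n R) (d ` {1..n})"
    then obtain d where dR: "\<forall>i\<in>{1..n}. d i \<in> R i"
      and ind: "hg_independent m (picod_edges n R) (d ` {1..n})" by blast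
    have "picod_scheme m n R 2 1 (\<lambda>b. \<lambda>k\<in>{1..1}. (\<Sum>x\<in>d ` {1..n}. b x) mod 2)"
      using indep_imp_scheme[OF _ dR ind] assms(2) by blast
    then have "beta_q m n R 2 \<le> 1" unfolding beta_q_def by (intro Least_le) blast
    then have le: "Inf ?K \<le> 1"
      by (metis (no_types, lifting) P2 cInf_lower bdd_below_def image_eqI mem_Collect_eq zero_le order.trans)
    have "Inf ?K \<ge> 1" using Inf_nat_def1[OF Kne] bq1 by auto
    then show "beta m n R = 1" using le bdef by simp
  qed
qed

end
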